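(* If a graph $G$ has an $\operatorname{IR}(G)$-set that is not independent and the $\operatorname{IR}$-graph $H=G(\operatorname{IR})$ is connected, then $H$ has an induced $4$-cycle or $\operatorname{diam}(H)\geq 3$.
   Context: All graphs are finite and simple. For $G=(V,E)$, $D\subseteq V$, $v\in D$: $\operatorname{PN}(v,D)=N[v]-N[D-\{v\}]$ (closed neighbourhoods). $D$ is irredundant if $\operatorname{PN}(v,D)\neq\varnothing$ for all $v\in D$; $\operatorname{IR}(G)$ is the maximum size of an irredundant set; an $\operatorname{IR}(G)$-set is an irredundant set of that size. $G(\operatorname{IR})$ has the $\operatorname{IR}(G)$-sets as vertices, with $D\sim D'$ iff there exist $u\in D$, $v\in D'$ with $uv\in E(G)$ and $D'=(D-\{u\})\cup\{v\}$. *)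

theory Defs
  imports Main
begin

definition simple_graph :: "'a set \<Rightarrow> ('a \<Rightarrow> 'a \<Rightarrow> bool) \<Rightarrow> bool" where
  "simple_graph V adj \<longleftrightarrow> finite V \<and> (\<forall>u v. adj u v \<longrightarrow> adj v u)
     \<and> (\<forall>v. \<not> adj v v) \<and> (\<forall>u v. adj u v \<longrightarrow> u \<in> V \<and> v \<in> V)"

definition cnbhd :: "'a set \<Rightarrow> ('a \<Rightarrow> 'a \<Rightarrow> bool) \<Rightarrow> 'a \<Rightarrow> 'a set" where
  "cnbhd V adj v = {u \<in> V. u = v \<or> adj v u}"

definition cnbhd_set :: "'a set \<Rightarrow> ('a \<Rightarrow> 'a \<Rightarrow> bool) \<Rightarrow> 'a set \<Rightarrow> 'a set" where
  "cnbhd_set V adj S = (\<Union>v\<in>S. cnbhd V adj v)"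

definition PN :: "'a set \<Rightarrow> ('a \<Rightarrow> 'a \<Rightarrow> bool) \<Rightarrow> 'a \<Rightarrow> 'a set \<Rightarrow> 'a set" where
  "PN V adj v D = cnbhd V adj v - cnbhd_set V adj (D - {v})"

definition irredundant :: "'a set \<Rightarrow> ('a \<Rightarrow> 'a \<Rightarrow> bool) \<Rightarrow> 'a set \<Rightarrow> bool" where
  "irredundant V adj D \<longleftrightarrow> D \<subseteq> V \<and> (\<forall>v\<in>D. PN V adj v D \<noteq> {})"

definition IR :: "'a set \<Rightarrow> ('a \<Rightarrow> 'a \<Rightarrow> bool) \<Rightarrow> nat" where
  "IR V adj = Max {card D | D. irredundant V adj D}"

definition IR_sets :: "'a set \<Rightarrow> ('a \<Rightarrow> 'a \<Rightarrow> bool) \<Rightarrow> 'a set set" where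
  "IR_sets V adj = {D. irredundant V adj D \<and> card D = IR V adj}"

definition IR_adj :: "('a \<Rightarrow> 'a \<Rightarrow> bool) \<Rightarrow> 'a set \<Rightarrow> 'a set \<Rightarrow> bool" where
  "IR_adj adj D D' \<longleftrightarrow> (\<exists>u\<in>D. \<exists>v\<in>D'. adj u v \<and> D' = (D - {u}) \<union> {v})"

definition IR_graph_adj :: "'a set \<Rightarrow> ('a \<Rightarrow> 'a \<Rightarrow> bool) \<Rightarrow> 'a set \<Rightarrow> 'a set \<Rightarrow> bool" where
  "IR_graph_adj V adj D D' \<longleftrightarrow> D \<in> IR_sets V adj \<and> D' \<in> IR_sets V adj \<and> IR_adj adj D D'"

definition independent :: "('a \<Rightarrow> 'a \<Rightarrow> bool) \<Rightarrow> 'a set \<Rightarrow> bool" where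
  "independent adj D \<longleftrightarrow> (\<forall>u\<in>D. \<forall>v\<in>D. \<not> adj u v)"

text \<open>Walks as vertex lists; xs is a walk from x to y of length (length xs - 1).\<close>
definition walk :: "'b set \<Rightarrow> ('b \<Rightarrow> 'b \<Rightarrow> bool) \<Rightarrow> 'b list \<Rightarrow> bool" where
  "walk V adj xs \<longleftrightarrow> xs \<noteq> [] \<and> set xs \<subseteq> V \<and>
     (\<forall>i. Suc i < length xs \<longrightarrow> adj (xs ! i) (xs ! Suc i))"

definition connected_graph :: "'b set \<Rightarrow> ('b \<Rightarrow> 'b \<Rightarrow> bool) \<Rightarrow> bool" where
  "connected_graph V adj \<longleftrightarrow>
     (\<forall>x\<in>V. \<forall>y\<in>V. \<exists>xs. walk V adj xs \<and> hd xs = x \<and> last xs = y)"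

definition dist :: "'b set \<Rightarrow> ('b \<Rightarrow> 'b \<Rightarrow> bool) \<Rightarrow> 'b \<Rightarrow> 'b \<Rightarrow> nat" where
  "dist V adj x y = (LEAST n. \<exists>xs. walk V adj xs \<and> hd xs = x \<and> last xs = y \<and> length xs = Suc n)"

definition diam :: "'b set \<Rightarrow> ('b \<Rightarrow> 'b \<Rightarrow> bool) \<Rightarrow> nat" where
  "diam V adj = Max {dist V adj x y | x y. x \<in> V \<and> y \<in> V}"

definition has_induced_C4 :: "'b set \<Rightarrow> ('b \<Rightarrow> 'b \<Rightarrow> bool) \<Rightarrow> bool" where
  "has_induced_C4 V adj \<longleftrightarrow> (\<exists>a\<in>V. \<exists>b\<in>V. \<exists>c\<in>V. \<exists>d\<in>V.
     distinct [a, b, c, d] \<and> adj a b \<and> adj b c \<and> adj c d \<and> adj d a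
     \<and> \<not> adj a c \<and> \<not> adj b d)"

end

theory Submission
  imports Defs
begin

lemma PN_iff:
  "w \<in> PN V adj v D \<longleftrightarrow> w \<in> V \<and> (w = v \<or> adj v w) \<and> (\<forall>u\<in>D-{v}. w \<noteq> u \<and> \<not> adj u w)"
  unfolding PN_def cnbhd_set_def cnbhd_def by auto

lemma PN_I:
  "w \<in> V \<Longrightarrow> (w = v \<or> adj v w) \<Longrightarrow> (\<And>u. u \<in> D \<Longrightarrow> u \<noteq> v \<Longrightarrow> w \<noteq> u \<and> \<not> adj u w)
   \<Longrightarrow> w \<in> PN V adj v D"
  unfolding PN_iff by blast

lemma walk_diff:
  assumes "walk W A xs" "\<And>D D'. A D D' \<Longrightarrow> \<exists>u. D - {u} \<subseteq> D'" "i < length xs"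
  shows "\<exists>S. finite S \<and> card S \<le> i \<and> xs!0 - S \<subseteq> xs!i"
  using assms(3)
proof (induction i)
  case 0 show ?case by (rule exI[of _ "{}"]) auto
next
  case (Suc i)
  then obtain S where S: "finite S" "card S \<le> i" "xs!0 - S \<subseteq> xs!i" by auto
  have "A (xs!i) (xs!Suc i)" using assms(1) Suc.prems unfolding walk_def by auto
  then obtain u where "xs!i - {u} \<subseteq> xs!Suc i" using assms(2) by blast
  then show ?case using S
    by (intro exI[of _ "insert u S"]) (auto simp: card_insert_if)
qed

lemma dist_ge3:
  assumes conn: "connected_graph W A" and X: "X \<in> W" and P: "P \<in> W"
    and step: "\<And>D D'. A D D' \<Longrightarrow> \<exists>u. D - {u} \<subseteq> D'"
    and T: "T \<subseteq> X - P" "card T = 3"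
  shows "dist W A X P \<ge> 3"
proof (rule ccontr)
  assume "\<not> ?thesis"
  hence lt: "dist W A X P < 3" by simp
  from conn X P obtain xs where xs: "walk W A xs" "hd xs = X" "last xs = P"
    unfolding connected_graph_def by blast
  hence "xs \<noteq> []" unfolding walk_def by auto
  hence ex: "\<exists>n xs. walk W A xs \<and> hd xs = X \<and> last xs = P \<and> length xs = Suc n"
    using xs by (intro exI[of _ "length xs - 1"] exI[of _ xs]) auto
  have "\<exists>xs. walk W A xs \<and> hd xs = X \<and> last xs = P \<and> length xs = Suc (dist W A X P)"
    unfolding dist_def by (rule LeastI_ex[OF ex])
  then obtain ys where ys: "walk W A ys" "hd ys = X" "last ys = P" "length ys = Suc (dist W A X P)"
    by blast
  then obtain S where S: "finite S" "card S \<le> dist W A X P" "ys!0 - S \<subseteq> ys!(dist W A X P)"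
    using walk_diff[OF ys(1) step, of "dist W A X P"] by auto
  have ne: "ys \<noteq> []" using ys(4) by auto
  have "ys!0 = X" using ys(2) ne by (simp add: hd_conv_nth)
  moreover have "ys!(dist W A X P) = P" using ys(3,4) ne by (simp add: last_conv_nth)
  ultimately have "T \<subseteq> S" using S T by auto
  hence "card T \<le> card S" using card_mono[OF S(1)] by blast
  thus False using S lt T by simp
qed

lemma dist_le_diam:
  assumes "finite W" "X \<in> W" "P \<in> W"
  shows "dist W A X P \<le> diam W A"
proof -
  have "{dist W A x y |x y. x \<in> W \<and> y \<in> W} = (\<lambda>(x,y). dist W A x y) ` (W \<times> W)" by auto
  hence fin: "finite {dist W A x y |x y. x \<in> W \<and> y \<in> W}" using assms(1) by simp
  show ?thesis unfolding diam_def by (rule Max_ge[OF fin]) (use assms in auto)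
qed

lemma IR_step:
  "IR_graph_adj V adj D D' \<Longrightarrow> \<exists>u. D - {u} \<subseteq> D'"
  unfolding IR_graph_adj_def IR_adj_def by auto

theorem corollary4p2:
  fixes V :: "'a set" and adj :: "'a \<Rightarrow> 'a \<Rightarrow> bool"
  assumes "simple_graph V adj"
    and "\<exists>D\<in>IR_sets V adj. \<not> independent adj D"
    and "connected_graph (IR_sets V adj) (IR_graph_adj V adj)"
  shows "has_induced_C4 (IR_sets V adj) (IR_graph_adj V adj)
         \<or> diam (IR_sets V adj) (IR_graph_adj V adj) \<ge> 3"
proof -
  have finV: "finite V" and sym: "\<And>u v. adj u v \<Longrightarrow> adj v u"
    and irr: "\<And>v. \<not> adj v v" and inV: "\<And>u v. adj u v \<Longrightarrow> u \<in> V \<and> v \<in> V"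
    using assms(1) unfolding simple_graph_def by auto
  have finIR: "finite (IR_sets V adj)"
    by (rule finite_subset[of _ "Pow V"]) (use finV in \<open>auto simp: IR_sets_def irredundant_def\<close>)
  obtain X where X: "X \<in> IR_sets V adj" and ni: "\<not> independent adj X" using assms(2) by blast
  have Xirr: "X \<subseteq> V" "\<And>v. v \<in> X \<Longrightarrow> PN V adj v X \<noteq> {}" and cX: "card X = IR V adj"
    using X unfolding IR_sets_def irredundant_def by auto
  have finX: "finite X" using Xirr(1) finV finite_subset by blast
  obtain x y where xy: "x \<in> X" "y \<in> X" "adj x y" using ni unfolding independent_def by blast
  have xney: "x \<noteq> y" using xy irr by auto
  obtain x' where x': "x' \<in> PN V adj x X" using Xirr(2)[OF xy(1)] by blast
  obtain y' where y': "y' \<in> PN V adj y X" using Xirr(2)[OF xy(2)] by blast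
  have IRset: "S \<in> IR_sets V adj" if "irredundant V adj S" "card S = card X" for S
    using that cX unfolding IR_sets_def by auto
  show ?thesis
  proof (cases "\<exists>v\<in>X-{x,y}. v \<notin> PN V adj v X")
    case True
    then obtain v where v: "v \<in> X" "v \<noteq> x" "v \<noteq> y" "v \<notin> PN V adj v X" by blast
    define p where "p u = (if u \<in> PN V adj u X then u else SOME w. w \<in> PN V adj u X)" for u
    have pPN: "p u \<in> PN V adj u X" if "u \<in> X" for u
      using Xirr(2)[OF that] unfolding p_def by (auto intro: someI)
    define P where "P = p ` X"
    have injp: "inj_on p X"
    proof (rule inj_onI)
      fix u w assume uw: "u \<in> X" "w \<in> X" "p u = p w"
      show "u = w"
      proof (rule ccontr)
        assume "u \<noteq> w"
        have "p u = u \<or> adj u (p u)" using pPN[OF uw(1)] by (simp add: PN_iff)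
        moreover have "p w \<noteq> u \<and> \<not> adj u (p w)" using pPN[OF uw(2)] uw(1) \<open>u \<noteq> w\<close>
          by (simp add: PN_iff)
        ultimately show False using uw(3) by auto
      qed
    qed
    have cP: "card P = card X" unfolding P_def using card_image[OF injp] .
    have Pirr: "irredundant V adj P"
      unfolding irredundant_def
    proof (intro conjI ballI)
      show "P \<subseteq> V" unfolding P_def using pPN by (auto simp: PN_iff)
      fix z assume "z \<in> P"
      then obtain u where u: "u \<in> X" "z = p u" unfolding P_def by blast
      have "u \<in> PN V adj z P"
        unfolding PN_iff
      proof (intro conjI)
        show "u \<in> V" using u Xirr(1) by auto
        show "u = z \<or> adj z u" using pPN[OF u(1)] u(2) sym by (auto simp: PN_iff)
        show "\<forall>w'\<in>P - {z}. u \<noteq> w' \<and> \<not> adj w' u"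
        proof
        fix w' assume "w' \<in> P - {z}"
        then obtain w where w: "w \<in> X" "w' = p w" "w \<noteq> u" unfolding P_def using u by auto
        have "p w \<noteq> u \<and> \<not> adj u (p w)" using pPN[OF w(1)] u(1) w(3) by (simp add: PN_iff)
        thus "u \<noteq> w' \<and> \<not> adj w' u" using w sym by auto
        qed
      qed
      thus "PN V adj z P \<noteq> {}" by blast
    qed
    have PIR: "P \<in> IR_sets V adj" using IRset[OF Pirr cP] .
    have notP: "u \<notin> P" if "u \<in> X" "u \<notin> PN V adj u X" for u
    proof
      assume "u \<in> P"
      then obtain w where w: "w \<in> X" "u = p w" unfolding P_def by blast
      show False
      proof (cases "w = u")
        case True thus False using w pPN[OF w(1)] that by auto
      next
        case False thus False using pPN[OF w(1)] that(1) w by (auto simp: PN_iff)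
      qed
    qed
    have xPN: "x \<notin> PN V adj x X" using xy xney sym by (auto simp: PN_iff)
    have yPN: "y \<notin> PN V adj y X" using xy xney sym by (auto simp: PN_iff)
    have T: "{x,y,v} \<subseteq> X - P" using notP xy v xPN yPN by auto
    have c3: "card {x,y,v} = 3" using xney v by auto
    have "dist (IR_sets V adj) (IR_graph_adj V adj) X P \<ge> 3"
      using dist_ge3[OF assms(3) X PIR _ T c3] IR_step by blast
    moreover have "dist (IR_sets V adj) (IR_graph_adj V adj) X P \<le> diam (IR_sets V adj) (IR_graph_adj V adj)"
      by (rule dist_le_diam[OF finIR X PIR])
    ultimately show ?thesis by simp
  next
    case False
    hence selfp: "\<And>v. v \<in> X \<Longrightarrow> v \<noteq> x \<Longrightarrow> v \<noteq> y \<Longrightarrow> v \<in> PN V adj v X" by blast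
    have x'f: "x' \<in> V" "adj x x'" "x' \<notin> X" "\<not> adj y x'"
      using x' xy xney irr sym by (auto simp: PN_iff)
    have y'f: "y' \<in> V" "adj y y'" "y' \<notin> X" "\<not> adj x y'"
      using y' xy xney irr sym by (auto simp: PN_iff)
    have x'X: "\<And>u. u \<in> X \<Longrightarrow> u \<noteq> x \<Longrightarrow> \<not> adj u x'" using x' by (auto simp: PN_iff)
    have y'X: "\<And>u. u \<in> X \<Longrightarrow> u \<noteq> y \<Longrightarrow> \<not> adj u y'" using y' by (auto simp: PN_iff)
    have x'y': "x' \<noteq> y'" using x'f y'f sym by auto
    have sp: "\<And>v u. v \<in> X \<Longrightarrow> v \<noteq> x \<Longrightarrow> v \<noteq> y \<Longrightarrow> u \<in> X \<Longrightarrow> u \<noteq> v \<Longrightarrow> \<not> adj u v"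
      using selfp by (auto simp: PN_iff)
    have x'X2: "\<And>u. u \<in> X \<Longrightarrow> u \<noteq> x \<Longrightarrow> \<not> adj x' u" using x'X sym by blast
    have y'X2: "\<And>u. u \<in> X \<Longrightarrow> u \<noteq> y \<Longrightarrow> \<not> adj y' u" using y'X sym by blast
    have sp2: "\<And>v u. v \<in> X \<Longrightarrow> v \<noteq> x \<Longrightarrow> v \<noteq> y \<Longrightarrow> u \<in> X \<Longrightarrow> u \<noteq> v \<Longrightarrow> \<not> adj v u"
      using sp sym by blast
    have sp3: "\<And>u w. u \<in> X \<Longrightarrow> w \<in> X \<Longrightarrow> adj u w \<Longrightarrow> (u = x \<and> w = y) \<or> (u = y \<and> w = x)"
    proof -
      fix u w assume uw: "u \<in> X" "w \<in> X" "adj u w"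
      have "u \<noteq> w" using uw irr by auto
      thus "(u = x \<and> w = y) \<or> (u = y \<and> w = x)" using sp[of w u] sp2[of u w] uw by auto
    qed
    have yx: "adj y x" using xy sym by blast
    have x'x: "adj x' x" "\<not> adj x' y" using x'f sym by auto
    have y'y: "adj y' y" "\<not> adj y' x" using y'f sym by auto
    define Z where "Z = X - {x} \<union> {x'}"
    define W where "W = X - {y} \<union> {y'}"
    define P where "P = X - {x,y} \<union> {x',y'}"
    have cZ: "card Z = card X" unfolding Z_def using finX xy x'f
      by (simp add: card_insert_if) (metis card_0_eq empty_iff Suc_pred neq0_conv)
    have cW: "card W = card X" unfolding W_def using finX xy y'f
      by (simp add: card_insert_if) (metis card_0_eq empty_iff Suc_pred neq0_conv)
    have cP: "card P = card X"
    proof -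
      have "P = insert x' (insert y' (X - {x,y}))" unfolding P_def by auto
      moreover have "card (X - {x,y}) = card X - 2" using finX xy xney by (simp add: card_Diff_subset)
      moreover have "card X \<ge> 2" using xy xney finX
        by (metis card_2_iff card_mono empty_subsetI insert_subset)
      ultimately show ?thesis using finX x'f y'f x'y' by (simp add: card_insert_if)
    qed
    have Zirr: "irredundant V adj Z"
      unfolding irredundant_def
    proof (intro conjI ballI)
      show "Z \<subseteq> V" unfolding Z_def using Xirr(1) x'f by auto
      fix z assume z: "z \<in> Z"
      have "z \<in> PN V adj z Z"
        using z Xirr(1) x'f xy xney x'X x'X2 sp sp2 sp3 x'x unfolding Z_def PN_iff by (auto dest: sp3)
      thus "PN V adj z Z \<noteq> {}" by blast
    qed
    have Wirr: "irredundant V adj W"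
      unfolding irredundant_def
    proof (intro conjI ballI)
      show "W \<subseteq> V" unfolding W_def using Xirr(1) y'f by auto
      fix z assume z: "z \<in> W"
      have "z \<in> PN V adj z W"
        using z Xirr(1) y'f xy xney y'X y'X2 sp sp2 sp3 y'y unfolding W_def PN_iff by (auto dest: sp3)
      thus "PN V adj z W \<noteq> {}" by blast
    qed
    have Pirr: "irredundant V adj P"
      unfolding irredundant_def
    proof (intro conjI ballI)
      show "P \<subseteq> V" unfolding P_def using Xirr(1) x'f y'f by auto
      fix z assume z: "z \<in> P"
      show "PN V adj z P \<noteq> {}"
      proof (cases "z = x'")
        case True
        have "x \<in> PN V adj z P"
        proof (rule PN_I)
          show "x \<in> V" using xy Xirr(1) by auto
          show "x = z \<or> adj z x" using True x'x by simp
          fix u assume u: "u \<in> P" "u \<noteq> z"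
          show "x \<noteq> u \<and> \<not> adj u x"
          proof (cases "u = y'")
            case True thus ?thesis using y'f y'y xy by auto
          next
            case False
            hence "u \<in> X" "u \<noteq> x" "u \<noteq> y" using u True unfolding P_def by auto
            thus ?thesis using sp2[of u x] xy by auto
          qed
        qed
        thus ?thesis by blast
      next
        case F1: False
        show ?thesis
        proof (cases "z = y'")
          case True
          have "y \<in> PN V adj z P"
          proof (rule PN_I)
            show "y \<in> V" using xy Xirr(1) by auto
            show "y = z \<or> adj z y" using True y'y by simp
            fix u assume u: "u \<in> P" "u \<noteq> z"
            show "y \<noteq> u \<and> \<not> adj u y"
            proof (cases "u = x'")
              case True thus ?thesis using x'f x'x xy by auto
            next
              case False
              hence "u \<in> X" "u \<noteq> x" "u \<noteq> y" using u True unfolding P_def by auto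
              thus ?thesis using sp2[of u y] xy by auto
            qed
          qed
          thus ?thesis by blast
        next
          case False
          hence zX: "z \<in> X" "z \<noteq> x" "z \<noteq> y" using z F1 unfolding P_def by auto
          have "z \<in> PN V adj z P"
          proof (rule PN_I)
            show "z \<in> V" using zX Xirr(1) by auto
            show "z = z \<or> adj z z" by simp
            fix u assume u: "u \<in> P" "u \<noteq> z"
            show "z \<noteq> u \<and> \<not> adj u z"
            proof -
              have "u = x' \<or> u = y' \<or> u \<in> X" using u unfolding P_def by auto
              thus ?thesis using x'X2[OF zX(1,2)] y'X2[OF zX(1,3)] x'f y'f zX sp[of z u] u(2) by auto
            qed
          qed
          thus ?thesis by blast
        qed
      qed
    qed
    have ZI: "Z \<in> IR_sets V adj" using IRset[OF Zirr cZ] .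
    have WI: "W \<in> IR_sets V adj" using IRset[OF Wirr cW] .
    have PI: "P \<in> IR_sets V adj" using IRset[OF Pirr cP] .
    have "IR_adj adj X Z" unfolding IR_adj_def
    proof (rule bexI[of _ x], rule bexI[of _ x'])
      show "adj x x' \<and> Z = X - {x} \<union> {x'}" using x'f Z_def by blast
      show "x' \<in> Z" unfolding Z_def by blast
      show "x \<in> X" using xy by blast
    qed
    hence a1: "IR_graph_adj V adj X Z" unfolding IR_graph_adj_def using X ZI by blast
    have eq2: "P = Z - {y} \<union> {y'}" unfolding P_def Z_def using x'f xy xney by auto
    have "IR_adj adj Z P" unfolding IR_adj_def
    proof (rule bexI[of _ y], rule bexI[of _ y'])
      show "adj y y' \<and> P = Z - {y} \<union> {y'}" using y'f eq2 by blast
      show "y' \<in> P" unfolding P_def by blast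
      show "y \<in> Z" unfolding Z_def using xy xney by blast
    qed
    hence a2: "IR_graph_adj V adj Z P" unfolding IR_graph_adj_def using ZI PI by blast
    have eq3: "W = P - {x'} \<union> {x}" unfolding P_def W_def using x'f y'f x'y' xy xney by auto
    have "IR_adj adj P W" unfolding IR_adj_def
    proof (rule bexI[of _ x'], rule bexI[of _ x])
      show "adj x' x \<and> W = P - {x'} \<union> {x}" using x'x eq3 by blast
      show "x \<in> W" unfolding W_def using xy xney by blast
      show "x' \<in> P" unfolding P_def by blast
    qed
    hence a3: "IR_graph_adj V adj P W" unfolding IR_graph_adj_def using WI PI by blast
    have eq4: "X = W - {y'} \<union> {y}" unfolding W_def using y'f xy by auto
    have "IR_adj adj W X" unfolding IR_adj_def
    proof (rule bexI[of _ y'], rule bexI[of _ y])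
      show "adj y' y \<and> X = W - {y'} \<union> {y}" using y'y eq4 by blast
      show "y \<in> X" using xy by blast
      show "y' \<in> W" unfolding W_def by blast
    qed
    hence a4: "IR_graph_adj V adj W X" unfolding IR_graph_adj_def using WI X by blast
    have n1: "\<not> IR_graph_adj V adj X P"
    proof
      assume "IR_graph_adj V adj X P"
      then obtain u where "X - {u} \<subseteq> P" using IR_step by blast
      thus False using xy xney unfolding P_def using x'f y'f by auto
    qed
    have n2: "\<not> IR_graph_adj V adj Z W"
    proof
      assume "IR_graph_adj V adj Z W"
      then obtain u where "Z - {u} \<subseteq> W" using IR_step by blast
      thus False using xy xney x'f y'f x'y' unfolding Z_def W_def by auto
    qed
    have "distinct [X, Z, P, W]"
      using xy xney x'f y'f x'y' unfolding Z_def W_def P_def by auto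
    hence "has_induced_C4 (IR_sets V adj) (IR_graph_adj V adj)"
      unfolding has_induced_C4_def using X ZI PI WI a1 a2 a3 a4 n1 n2 by blast
    thus ?thesis by simp
  qed
qed

end
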